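(* Let $K=\mathrm{SU}(2)$, $\mathcal{M}=\{(g_1,h_1,g_2,h_2)\in K^4:[g_1,h_1][g_2,h_2]=I\}/K$, and set $P_1=\{[a;b;b;a]: a,b\in K,\ [a,b]=I\}$ and $P_2=\{[a;b;b^{-1};a^{-1}]: a,b\in K,\ [a,b]=I\}$. For a commuting pair $(g,h)\in K^2$ let $$I_{(g,h)}=\{[g;h;khk^{-1};kgk^{-1}] : k\in K,\ k^2=-I\}\subset\mathcal{M}.$$ (1) If $(g,h)\notin\{(\pm I,\pm I)\}$, then $I_{(g,h)}\cong S^2/S^1$ is a closed interval: there is a homeomorphism $\mathfrak{I}_{(g,h)}:[0,1]\to I_{(g,h)}$ with $\mathfrak{I}_{(g,h)}(0)\in P_1$ (namely $[g;h;h;g]$), $\mathfrak{I}_{(g,h)}(1)\in P_2$ (namely $[g;h;h^{-1};g^{-1}]$), and $\mathfrak{I}_{(g,h)}(t)\notin P_1\cup P_2$ for all $t\in(0,1)$. (2) If $(g,h)=(\pm I,\pm I)$, then $I_{(g,h)}$ is a single point, one of $[I;I;I;I]$, $[I;-I;-I;I]$, $[-I;I;I;-I]$, $[-I;-I;-I;-I]$.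
   Context: $[a,b]=aba^{-1}b^{-1}$; $K$ acts by simultaneous conjugation and $[g_1;h_1;g_2;h_2]$ denotes a class in $\mathcal{M}$ (quotient topology). $P_1$ is the boundary surface of the "Goldman pillow" $\{[a;b;b;a]\}$ and $P_2$ the boundary surface of the second pillow $\{[a;b;kbk^{-1};kak^{-1}]: k^2=-I, [a,b]\text{ commutes with }k\}$ appearing in the fixed set of the involution $[g_1;h_1;g_2;h_2]\mapsto[h_2;g_2;h_1;g_1]$. *)

theory Defs
  imports "HOL-Analysis.Analysis"
begin

type_synonym cmat = "complex^2^2"

definition cadj :: "cmat \<Rightarrow> cmat" where
  "cadj A = (\<chi> i j. cnj (A $ j $ i))"

definition SU2 :: "cmat set" where
  "SU2 = {A. A ** cadj A = mat 1 \<and> det A = 1}"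

definition comm :: "cmat \<Rightarrow> cmat \<Rightarrow> cmat" where
  "comm a b = a ** b ** matrix_inv a ** matrix_inv b"

type_synonym quad = "cmat \<times> cmat \<times> cmat \<times> cmat"

definition RepSp :: "quad set" where
  "RepSp = {(g1, h1, g2, h2). g1 \<in> SU2 \<and> h1 \<in> SU2 \<and> g2 \<in> SU2 \<and> h2 \<in> SU2 \<and>
              comm g1 h1 ** comm g2 h2 = mat 1}"

definition conjq :: "cmat \<Rightarrow> quad \<Rightarrow> quad" where
  "conjq k q = (case q of (g1, h1, g2, h2) \<Rightarrow>
     (k ** g1 ** matrix_inv k, k ** h1 ** matrix_inv k,
      k ** g2 ** matrix_inv k, k ** h2 ** matrix_inv k))"

text \<open>The class [g1;h1;g2;h2] in M: the K-orbit of the quadruple.\<close>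
definition cls :: "quad \<Rightarrow> quad set" where
  "cls q = {conjq k q | k. k \<in> SU2}"

definition quotient_top :: "'a topology \<Rightarrow> ('a \<Rightarrow> 'b) \<Rightarrow> 'b topology" where
  "quotient_top X p =
     topology (\<lambda>U. U \<subseteq> p ` topspace X \<and> openin X {x \<in> topspace X. p x \<in> U})"

definition Mtop :: "quad set topology" where
  "Mtop = quotient_top (top_of_set RepSp) cls"

definition P1 :: "quad set set" where
  "P1 = {cls (a, b, b, a) | a b. a \<in> SU2 \<and> b \<in> SU2 \<and> comm a b = mat 1}"

definition P2 :: "quad set set" where
  "P2 = {cls (a, b, matrix_inv b, matrix_inv a) | a b.
           a \<in> SU2 \<and> b \<in> SU2 \<and> comm a b = mat 1}"

definition Iseg :: "cmat \<Rightarrow> cmat \<Rightarrow> quad set set" where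
  "Iseg g h = {cls (g, h, k ** h ** matrix_inv k, k ** g ** matrix_inv k) | k.
                 k \<in> SU2 \<and> k ** k = - mat 1}"

end

theory Submission
  imports Defs
begin

definition mk :: "complex \<Rightarrow> complex \<Rightarrow> complex \<Rightarrow> complex \<Rightarrow> cmat" where
  "mk a b c d = (\<chi> i j. if i = 1 then (if j = 1 then a else b) else (if j = 1 then c else d))"

lemma mk_nth[simp]: "mk a b c d $ 1 $ 1 = a" "mk a b c d $ 1 $ 2 = b"
   "mk a b c d $ 2 $ 1 = c" "mk a b c d $ 2 $ 2 = d"
  by (simp_all add: mk_def)

lemma mk_entries: "A = mk (A$1$1) (A$1$2) (A$2$1) (A$2$2)"
  unfolding mk_def by (simp add: vec_eq_iff forall_2)

lemma mk_eq_iff[simp]: "mk a b c d = mk a' b' c' d' \<longleftrightarrow> a = a' \<and> b = b' \<and> c = c' \<and> d = d'"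
  by (metis mk_nth)

lemma mk_mult[simp]: "mk a b c d ** mk e f g h = mk (a*e+b*g) (a*f+b*h) (c*e+d*g) (c*f+d*h)"
  by (subst mk_entries) (simp add: matrix_matrix_mult_def sum_2)

lemma mat1_mk: "mat 1 = mk 1 0 0 1"
  by (subst mk_entries) (simp add: mat_def)

lemma neg_mk[simp]: "- mk a b c d = mk (-a) (-b) (-c) (-d)"
  by (subst mk_entries) simp

lemma det_mk[simp]: "det (mk a b c d) = a*d - b*c"
  by (simp add: det_2)

lemma cadj_mk[simp]: "cadj (mk a b c d) = mk (cnj a) (cnj c) (cnj b) (cnj d)"
  by (subst mk_entries) (simp add: cadj_def)

lemma mk_cases: obtains a b c d where "A = mk a b c d"
  using mk_entries by blast

lemma SU2_iff: "A \<in> SU2 \<longleftrightarrow> (\<exists>a b. A = mk a b (- cnj b) (cnj a) \<and> a * cnj a + b * cnj b = 1)"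
proof
  assume "A \<in> SU2"
  obtain a b c d where A: "A = mk a b c d" by (rule mk_cases)
  from \<open>A \<in> SU2\<close> have e: "a * cnj a + b * cnj b = 1" "c * cnj a + d * cnj b = 0" "a*d - b*c = 1"
    by (auto simp: SU2_def A mat1_mk)
  have "d = cnj a" using e by algebra
  moreover have "c = - cnj b" using e by algebra
  ultimately show "\<exists>a b. A = mk a b (- cnj b) (cnj a) \<and> a * cnj a + b * cnj b = 1" using A e by auto
next
  assume "\<exists>a b. A = mk a b (- cnj b) (cnj a) \<and> a * cnj a + b * cnj b = 1"
  then obtain a b where "A = mk a b (- cnj b) (cnj a)" "a * cnj a + b * cnj b = 1" by blast
  then show "A \<in> SU2" by (simp add: SU2_def mat1_mk algebra_simps)
qed

lemma SU2_mk: "a * cnj a + b * cnj b = 1 \<Longrightarrow> mk a b (- cnj b) (cnj a) \<in> SU2"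
  using SU2_iff by blast

lemma cadj_mult: "cadj (A ** B) = cadj B ** cadj A"
  apply (cases A rule: mk_cases, cases B rule: mk_cases) by (simp add: mult.commute)

lemma SU2_right: "A \<in> SU2 \<Longrightarrow> A ** cadj A = mat 1"
  by (simp add: SU2_def)

lemma SU2_left: "A \<in> SU2 \<Longrightarrow> cadj A ** A = mat 1"
  unfolding SU2_iff by (auto simp: mat1_mk algebra_simps)

lemma SU2_inv: "A \<in> SU2 \<Longrightarrow> matrix_inv A = cadj A"
proof -
  assume A: "A \<in> SU2"
  have ex: "A ** cadj A = mat 1 \<and> cadj A ** A = mat 1" using SU2_right SU2_left A by blast
  have "\<And>B. A ** B = mat 1 \<and> B ** A = mat 1 \<Longrightarrow> B = cadj A"
    by (metis ex matrix_mul_assoc matrix_mul_lid matrix_mul_rid)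
  then show ?thesis unfolding matrix_inv_def by (metis (mono_tags, lifting) ex someI)
qed

lemma SU2_mult: "A \<in> SU2 \<Longrightarrow> B \<in> SU2 \<Longrightarrow> A ** B \<in> SU2"
  unfolding SU2_def by (auto simp: cadj_mult det_mul matrix_mul_assoc)
    (metis matrix_mul_assoc matrix_mul_rid)

lemma SU2_cadj: "A \<in> SU2 \<Longrightarrow> cadj A \<in> SU2"
proof -
  assume "A \<in> SU2"
  then obtain a b where A: "A = mk a b (- cnj b) (cnj a)" "a * cnj a + b * cnj b = 1"
    unfolding SU2_iff by blast
  have "cadj A = mk (cnj a) (- b) (- cnj (- b)) (cnj (cnj a))" using A by simp
  moreover have "cnj a * cnj (cnj a) + (- b) * cnj (- b) = 1" using A(2) by (simp add: algebra_simps)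
  ultimately show ?thesis using SU2_mk by metis
qed

lemma SU2_one: "mat 1 \<in> SU2"
  by (simp add: SU2_def mat1_mk)

lemma SU2_neg: "A \<in> SU2 \<Longrightarrow> - A \<in> SU2"
proof -
  assume "A \<in> SU2"
  then obtain a b where A: "A = mk a b (- cnj b) (cnj a)" "a * cnj a + b * cnj b = 1"
    unfolding SU2_iff by blast
  have "- A = mk (-a) (- b) (- cnj (- b)) (cnj (-a))" using A by simp
  moreover have "(-a) * cnj (-a) + (- b) * cnj (- b) = 1" using A(2) by (simp add: algebra_simps)
  ultimately show ?thesis using SU2_mk by metis
qed

lemma SU2_inv_in: "A \<in> SU2 \<Longrightarrow> matrix_inv A \<in> SU2"
  by (simp add: SU2_inv SU2_cadj)

lemma SU2_rinv: "A \<in> SU2 \<Longrightarrow> A ** matrix_inv A = mat 1"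
  by (simp add: SU2_inv SU2_right)

lemma SU2_linv: "A \<in> SU2 \<Longrightarrow> matrix_inv A ** A = mat 1"
  by (simp add: SU2_inv SU2_left)

lemma inv_mult: "A \<in> SU2 \<Longrightarrow> B \<in> SU2 \<Longrightarrow> matrix_inv (A ** B) = matrix_inv B ** matrix_inv A"
  by (simp add: SU2_inv SU2_mult cadj_mult)

lemma inv_inv: "A \<in> SU2 \<Longrightarrow> matrix_inv (matrix_inv A) = A"
  by (simp add: SU2_inv SU2_cadj) (cases A rule: mk_cases, simp)

lemma inv_one: "matrix_inv (mat 1 :: cmat) = mat 1"
  by (simp add: SU2_inv SU2_one) (simp add: mat1_mk)

lemma inv_neg: "A \<in> SU2 \<Longrightarrow> matrix_inv (- A) = - matrix_inv A"
  by (simp add: SU2_inv SU2_neg) (cases A rule: mk_cases, simp)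

definition cnjg :: "cmat \<Rightarrow> cmat \<Rightarrow> cmat" where
  "cnjg k A = k ** A ** matrix_inv k"

lemma conjq_simp[simp]: "conjq k (a, b, c, d) = (cnjg k a, cnjg k b, cnjg k c, cnjg k d)"
  by (simp add: conjq_def cnjg_def)

lemma mmul_neg: "(A::cmat) ** (- (B::cmat)) = - (A ** B)" "(- A) ** B = - (A ** B)"
  by (cases A rule: mk_cases, cases B rule: mk_cases, simp)+

lemma cnjg_mult: "k \<in> SU2 \<Longrightarrow> cnjg k (A ** B) = cnjg k A ** cnjg k B"
proof -
  assume k: "k \<in> SU2"
  have "cnjg k A ** cnjg k B = k ** A ** (matrix_inv k ** k) ** B ** matrix_inv k"
    unfolding cnjg_def by (simp add: matrix_mul_assoc)
  also have "\<dots> = cnjg k (A ** B)" using k unfolding cnjg_def by (simp add: SU2_linv matrix_mul_assoc)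
  finally show ?thesis by simp
qed

lemma cnjg_comp: "k \<in> SU2 \<Longrightarrow> u \<in> SU2 \<Longrightarrow> cnjg k (cnjg u A) = cnjg (k ** u) A"
  unfolding cnjg_def by (simp add: inv_mult matrix_mul_assoc)

lemma cnjg_one[simp]: "cnjg (mat 1) A = A"
  unfolding cnjg_def by (simp add: inv_one)

lemma cnjg_SU2: "k \<in> SU2 \<Longrightarrow> A \<in> SU2 \<Longrightarrow> cnjg k A \<in> SU2"
  unfolding cnjg_def by (simp add: SU2_mult SU2_inv_in)

lemma cnjg_inv: "k \<in> SU2 \<Longrightarrow> A \<in> SU2 \<Longrightarrow> cnjg k (matrix_inv A) = matrix_inv (cnjg k A)"
  unfolding cnjg_def by (simp add: inv_mult SU2_mult SU2_inv_in inv_inv matrix_mul_assoc)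

lemma cnjg_back: "k \<in> SU2 \<Longrightarrow> cnjg (matrix_inv k) (cnjg k A) = A"
  by (simp add: cnjg_comp SU2_inv_in SU2_linv)

lemma cnjg_central: "k \<in> SU2 \<Longrightarrow> cnjg k (mat 1) = mat 1" "k \<in> SU2 \<Longrightarrow> cnjg k (- mat 1) = - mat 1"
  unfolding cnjg_def by (simp_all add: SU2_rinv mmul_neg)

lemma conjq_comp: "k \<in> SU2 \<Longrightarrow> u \<in> SU2 \<Longrightarrow> conjq k (conjq u q) = conjq (k ** u) q"
  by (cases q rule: prod_cases4) (simp add: cnjg_comp)

lemma conjq_one: "conjq (mat 1) q = q"
  by (cases q rule: prod_cases4) simp

lemma cls_self: "q \<in> cls q"
proof -
  have "q = conjq (mat 1) q" by (simp add: conjq_one)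
  then show ?thesis unfolding cls_def using SU2_one by blast
qed

lemma cls_conjq: assumes "u \<in> SU2" shows "cls (conjq u q) = cls q"
proof
  show "cls (conjq u q) \<subseteq> cls q"
    unfolding cls_def using assms by (auto simp: conjq_comp intro!: SU2_mult)
  show "cls q \<subseteq> cls (conjq u q)"
  proof
    fix x assume "x \<in> cls q"
    then obtain k where k: "k \<in> SU2" "x = conjq k q" unfolding cls_def by blast
    have "x = conjq (k ** matrix_inv u) (conjq u q)"
      using k assms by (simp add: conjq_comp SU2_inv_in SU2_mult matrix_mul_assoc[symmetric] SU2_linv)
    then show "x \<in> cls (conjq u q)" unfolding cls_def
      using k assms SU2_inv_in SU2_mult by blast
  qed
qed

lemma cls_eqD: "cls q = cls q' \<Longrightarrow> \<exists>m\<in>SU2. q = conjq m q'"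
  using cls_self[of q] unfolding cls_def by auto

lemma comm_iff: "a \<in> SU2 \<Longrightarrow> b \<in> SU2 \<Longrightarrow> comm a b = mat 1 \<longleftrightarrow> a ** b = b ** a"
proof
  assume ab: "a \<in> SU2" "b \<in> SU2" and c: "comm a b = mat 1"
  have "comm a b ** b ** a = a ** b ** matrix_inv a ** (matrix_inv b ** b) ** a"
    unfolding comm_def by (simp add: matrix_mul_assoc)
  also have "\<dots> = a ** b ** (matrix_inv a ** a)" using ab by (simp add: SU2_linv matrix_mul_assoc[symmetric])
  also have "\<dots> = a ** b" using ab by (simp add: SU2_linv)
  finally have "a ** b = comm a b ** b ** a" by simp
  then show "a ** b = b ** a" using c by simp
next
  assume ab: "a \<in> SU2" "b \<in> SU2" and c: "a ** b = b ** a"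
  have "comm a b = b ** a ** matrix_inv a ** matrix_inv b" unfolding comm_def using c by simp
  also have "\<dots> = b ** (a ** matrix_inv a) ** matrix_inv b" by (simp add: matrix_mul_assoc)
  also have "\<dots> = mat 1" using ab by (simp add: SU2_rinv)
  finally show "comm a b = mat 1" .
qed

lemma RepSp_I: assumes "g \<in> SU2" "h \<in> SU2" "g ** h = h ** g" "k \<in> SU2"
  shows "(g, h, cnjg k h, cnjg k g) \<in> RepSp"
proof -
  have c1: "comm g h = mat 1" using assms comm_iff by blast
  have "cnjg k h ** cnjg k g = cnjg k g ** cnjg k h"
    using assms by (simp add: cnjg_mult[symmetric])
  then have "comm (cnjg k h) (cnjg k g) = mat 1" using assms comm_iff cnjg_SU2 by blast
  then show ?thesis unfolding RepSp_def using assms(1,2,4) c1 cnjg_SU2[OF assms(4)] by simp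
qed

lemma conjq_RepSp: assumes "q \<in> RepSp" "k \<in> SU2" shows "conjq k q \<in> RepSp"
proof -
  obtain g1 h1 g2 h2 where q: "q = (g1,h1,g2,h2)" by (cases q) auto
  have s: "g1 \<in> SU2" "h1 \<in> SU2" "g2 \<in> SU2" "h2 \<in> SU2" and c: "comm g1 h1 ** comm g2 h2 = mat 1"
    using assms unfolding RepSp_def q by auto
  have cc: "comm (cnjg k a) (cnjg k b) = cnjg k (comm a b)" if "a \<in> SU2" "b \<in> SU2" for a b
    unfolding comm_def using that assms
    by (simp add: cnjg_mult cnjg_inv SU2_mult SU2_inv_in)
  have "comm (cnjg k g1) (cnjg k h1) ** comm (cnjg k g2) (cnjg k h2) = cnjg k (comm g1 h1) ** cnjg k (comm g2 h2)"
    using s by (simp only: cc)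
  also have "\<dots> = cnjg k (comm g1 h1 ** comm g2 h2)" using assms by (simp only: cnjg_mult)
  also have "\<dots> = mat 1" using c assms cnjg_central by simp
  finally have "comm (cnjg k g1) (cnjg k h1) ** comm (cnjg k g2) (cnjg k h2) = mat 1" .
  then show ?thesis using s assms unfolding RepSp_def q by (simp add: cnjg_SU2)
qed

definition tr :: "cmat \<Rightarrow> complex" where "tr A = A$1$1 + A$2$2"

lemma tr_comm: "tr (A ** B) = tr (B ** A)"
  by (cases A rule: mk_cases, cases B rule: mk_cases) (simp add: tr_def algebra_simps)

definition Fq :: "quad \<Rightarrow> real" where
  "Fq q = (case q of (g1, h1, g2, h2) \<Rightarrow> Re (tr (g1 ** h2) + tr (h1 ** g2)))"

lemma tr_cnjg: "k \<in> SU2 \<Longrightarrow> tr (cnjg k A ** cnjg k B) = tr (A ** B)"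
proof -
  assume k: "k \<in> SU2"
  have "cnjg k A ** cnjg k B = k ** (A ** B ** matrix_inv k)"
    using cnjg_mult[OF k, of A B] unfolding cnjg_def by (simp add: matrix_mul_assoc)
  then have "tr (cnjg k A ** cnjg k B) = tr (A ** B ** matrix_inv k ** k)"
    using tr_comm by (metis matrix_mul_assoc)
  also have "\<dots> = tr (A ** B)" using k by (simp add: SU2_linv matrix_mul_assoc[symmetric])
  finally show ?thesis .
qed

lemma Fq_conjq: "k \<in> SU2 \<Longrightarrow> Fq (conjq k q) = Fq q"
proof -
  assume k: "k \<in> SU2"
  obtain a b c d where q: "q = (a,b,c,d)" by (cases q rule: prod_cases4)
  show ?thesis unfolding q conjq_simp Fq_def prod.case using tr_cnjg[OF k] by simp
qed

lemma istop_quot: "istopology (\<lambda>U. U \<subseteq> p ` topspace X \<and> openin X {x \<in> topspace X. p x \<in> U})"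
proof (simp only: istopology_def, rule conjI; intro allI impI)
  fix S T assume S: "S \<subseteq> p ` topspace X \<and> openin X {x \<in> topspace X. p x \<in> S}"
    and T: "T \<subseteq> p ` topspace X \<and> openin X {x \<in> topspace X. p x \<in> T}"
  have "{x \<in> topspace X. p x \<in> S \<inter> T} = {x \<in> topspace X. p x \<in> S} \<inter> {x \<in> topspace X. p x \<in> T}" by auto
  then show "S \<inter> T \<subseteq> p ` topspace X \<and> openin X {x \<in> topspace X. p x \<in> S \<inter> T}"
    using S T by auto
next
  fix \<K> assume K: "\<forall>K\<in>\<K>. K \<subseteq> p ` topspace X \<and> openin X {x \<in> topspace X. p x \<in> K}"
  have "{x \<in> topspace X. p x \<in> \<Union>\<K>} = \<Union>((\<lambda>K. {x \<in> topspace X. p x \<in> K}) ` \<K>)" by auto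
  moreover have "openin X (\<Union>((\<lambda>K. {x \<in> topspace X. p x \<in> K}) ` \<K>))"
    using K by (intro openin_Union) auto
  ultimately show "\<Union>\<K> \<subseteq> p ` topspace X \<and> openin X {x \<in> topspace X. p x \<in> \<Union>\<K>}"
    using K by auto
qed

lemma openin_Mtop: "openin Mtop U \<longleftrightarrow> U \<subseteq> cls ` RepSp \<and> openin (top_of_set RepSp) {x \<in> RepSp. cls x \<in> U}"
  unfolding Mtop_def quotient_top_def using topology_inverse'[OF istop_quot, of cls "top_of_set RepSp"]
  by simp

lemma topspace_Mtop: "topspace Mtop = cls ` RepSp"
proof
  show "topspace Mtop \<subseteq> cls ` RepSp" unfolding topspace_def openin_Mtop by auto
  have eq: "{x \<in> RepSp. cls x \<in> cls ` RepSp} = topspace (top_of_set RepSp)" by auto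
  have "openin Mtop (cls ` RepSp)" unfolding openin_Mtop by (simp only: eq openin_topspace subset_refl simp_thms)
  then show "cls ` RepSp \<subseteq> topspace Mtop" by (rule openin_subset)
qed

lemma cont_cls: "continuous_map (top_of_set RepSp) Mtop cls"
  unfolding continuous_map_def topspace_Mtop
proof (intro conjI allI impI)
  show "cls \<in> topspace (top_of_set RepSp) \<rightarrow> cls ` RepSp" by auto
  fix U assume "openin Mtop U"
  then show "openin (top_of_set RepSp) {x \<in> topspace (top_of_set RepSp). cls x \<in> U}"
    unfolding openin_Mtop by simp
qed

lemma tr_mult_expand: "tr ((A::cmat) ** B) = A$1$1*B$1$1 + A$1$2*B$2$1 + A$2$1*B$1$2 + A$2$2*B$2$2"
  by (cases A rule: mk_cases, cases B rule: mk_cases) (simp add: tr_def algebra_simps)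

lemma Fq_alt: "Fq = (\<lambda>q. Re (tr (fst q ** snd (snd (snd q))) + tr (fst (snd q) ** fst (snd (snd q)))))"
  by (auto simp: Fq_def fun_eq_iff split: prod.splits)

lemma cont_Fq: "continuous_on S Fq"
  unfolding Fq_alt tr_mult_expand
  by (intro continuous_intros)

definition Phi :: "quad set \<Rightarrow> real" where "Phi c = Fq (SOME q. q \<in> c)"

lemma Phi_cls: "Phi (cls q) = Fq q"
proof -
  have "(SOME x. x \<in> cls q) \<in> cls q" using cls_self by (metis someI)
  then obtain m where "m \<in> SU2" "(SOME x. x \<in> cls q) = conjq m q" unfolding cls_def by blast
  then show ?thesis unfolding Phi_def by (simp add: Fq_conjq)
qed

lemma cont_Phi: "continuous_map Mtop euclideanreal Phi"
  unfolding continuous_map_def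
proof (intro conjI allI impI)
  show "Phi \<in> topspace Mtop \<rightarrow> topspace euclideanreal" by auto
  fix U :: "real set" assume U: "openin euclideanreal U"
  have cm: "continuous_map (top_of_set RepSp) euclideanreal Fq" using cont_Fq by simp
  have "{x \<in> RepSp. cls x \<in> {c \<in> topspace Mtop. Phi c \<in> U}} = {x \<in> topspace (top_of_set RepSp). Fq x \<in> U}"
    by (auto simp: topspace_Mtop Phi_cls)
  moreover have "openin (top_of_set RepSp) {x \<in> topspace (top_of_set RepSp). Fq x \<in> U}"
    using openin_continuous_map_preimage[OF cm U] .
  ultimately show "openin Mtop {x \<in> topspace Mtop. Phi x \<in> U}"
    unfolding openin_Mtop by (simp add: topspace_Mtop)
qed

definition dg :: "complex \<Rightarrow> cmat" where "dg p = mk p 0 0 (cnj p)"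

definition Kmat :: "real \<Rightarrow> complex \<Rightarrow> cmat" where
  "Kmat x w = mk (\<i> * of_real x) w (- cnj w) (- (\<i> * of_real x))"

definition Rot :: "real \<Rightarrow> complex \<Rightarrow> complex \<Rightarrow> cmat" where
  "Rot x w q = mk (of_real (x^2) * q + w * cnj w * cnj q) (\<i> * of_real x * w * (cnj q - q))
                  (\<i> * of_real x * cnj w * (q - cnj q)) (w * cnj w * q + of_real (x^2) * cnj q)"

lemma ii: "\<i> * a * (\<i> * b) = - (a * (b::complex))" by (simp add: algebra_simps)

lemma wcnj: "w * cnj w = complex_of_real ((cmod w)^2)"
  by (rule complex_norm_square[symmetric])

lemma dg_SU2: "p * cnj p = 1 \<Longrightarrow> dg p \<in> SU2"
  unfolding dg_def using SU2_mk[of p 0] by simp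

lemma dg_SU2_iff: "dg p \<in> SU2 \<longleftrightarrow> p * cnj p = 1"
  unfolding dg_def SU2_iff by auto

lemma Kmat_SU2: "x^2 + (cmod w)^2 = 1 \<Longrightarrow> Kmat x w \<in> SU2"
proof -
  assume h: "x^2 + (cmod w)^2 = 1"
  have "(\<i> * of_real x) * cnj (\<i> * of_real x) = complex_of_real (x^2)"
    by (simp add: power2_eq_square ii)
  then have "(\<i> * of_real x) * cnj (\<i> * of_real x) + w * cnj w = of_real (x^2 + (cmod w)^2)"
    by (simp add: wcnj)
  then have "(\<i> * of_real x) * cnj (\<i> * of_real x) + w * cnj w = 1" using h by simp
  from SU2_mk[OF this] show ?thesis unfolding Kmat_def by simp
qed

lemma Kmat_sq: "x^2 + (cmod w)^2 = 1 \<Longrightarrow> Kmat x w ** Kmat x w = - mat 1"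
proof -
  assume h: "x^2 + (cmod w)^2 = 1"
  have e: "of_real (x^2) + w * cnj w = 1"
    using h by (metis complex_norm_square of_real_1 of_real_add mult.commute)
  have "Kmat x w ** Kmat x w = mk (- (of_real (x^2) + w * cnj w)) 0 0 (- (of_real (x^2) + w * cnj w))"
    unfolding Kmat_def by (simp add: algebra_simps power2_eq_square)
  also have "\<dots> = mk (-1) 0 0 (-1)" by (simp only: e)
  finally show ?thesis by (simp add: mat1_mk)
qed

lemma Kmat_conj: "x^2 + (cmod w)^2 = 1 \<Longrightarrow> cnjg (Kmat x w) (dg q) = Rot x w q"
proof -
  assume h: "x^2 + (cmod w)^2 = 1"
  show ?thesis unfolding cnjg_def SU2_inv[OF Kmat_SU2[OF h]]
    by (simp add: Kmat_def dg_def Rot_def algebra_simps power2_eq_square)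
qed

lemma Rot_neg: "Rot (-x) (-w) q = Rot x w q"
  unfolding Rot_def by simp

lemma Ksq_cases: assumes "k \<in> SU2" "k ** k = - mat 1"
  shows "\<exists>x w. k = Kmat x w \<and> x^2 + (cmod w)^2 = 1"
proof -
  obtain a b where k: "k = mk a b (- cnj b) (cnj a)" "a * cnj a + b * cnj b = 1"
    using assms(1) unfolding SU2_iff by blast
  have "a * a - b * cnj b = -1" using assms(2) unfolding k(1) by (simp add: mat1_mk)
  then have "a * (a + cnj a) = 0" using k(2) by algebra
  then have "a = 0 \<or> a + cnj a = 0" by simp
  then have "Re a = 0"
  proof
    assume "a + cnj a = 0"
    then have "Re (a + cnj a) = 0" by simp
    then show "Re a = 0" by simp
  qed simp
  then have a: "a = \<i> * of_real (Im a)" by (simp add: complex_eq_iff)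
  have "(Im a)^2 + (cmod b)^2 = 1"
  proof -
    have "(cmod a)^2 = (Im a)^2" using \<open>Re a = 0\<close> by (simp add: cmod_power2)
    then have "of_real ((Im a)^2 + (cmod b)^2) = a * cnj a + b * cnj b"
      by (simp only: wcnj of_real_add)
    then have "of_real ((Im a)^2 + (cmod b)^2) = (1::complex)"
      using k(2) by simp
    then show ?thesis using of_real_eq_1_iff by blast
  qed
  moreover have "k = Kmat (Im a) b" unfolding k(1) Kmat_def
    by (subst a, subst (2) a) simp
  ultimately show ?thesis by blast
qed

lemma dg_inv: "p * cnj p = 1 \<Longrightarrow> matrix_inv (dg p) = dg (cnj p)"
  by (simp add: SU2_inv dg_SU2) (simp add: dg_def)

lemma dg_mult: "dg p ** dg q = dg (p * q)"
  by (simp add: dg_def)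

lemma dg_comm: "dg p ** dg q = dg q ** dg p"
  by (simp add: dg_mult mult.commute)

lemma cnjg_dg_dg: "e * cnj e = 1 \<Longrightarrow> cnjg (dg e) (dg p) = dg p"
proof -
  assume e: "e * cnj e = 1"
  have "e * p * cnj e = p" using e by algebra
  moreover have "cnjg (dg e) (dg p) = dg (e * p * cnj e)" unfolding cnjg_def dg_inv[OF e] dg_mult ..
  ultimately show ?thesis by (simp only:)
qed

lemma cnjg_dg_Rot: assumes e: "e * cnj e = 1"
  shows "cnjg (dg e) (Rot y (of_real s) q) = Rot y (e^2 * of_real s) q"
proof -
  have "cnjg (dg e) (Rot y (of_real s) q) = dg e ** Rot y (of_real s) q ** dg (cnj e)"
    unfolding cnjg_def using e by (simp add: dg_inv)
  also have "\<dots> = Rot y (e^2 * of_real s) q"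
    unfolding dg_def Rot_def mk_mult mk_eq_iff
    apply (intro conjI)
    apply (simp add: power2_eq_square; use e in algebra)+
    done
  finally show ?thesis .
qed

lemma Re_tr_Rot: assumes p: "(Re p)^2 + (Im p)^2 = 1" and xw: "x^2 + (cmod w)^2 = 1"
  shows "Re (tr (dg p ** Rot x w p)) = 2 - 4 * x^2 * (Im p)^2"
proof -
  have "tr (dg p ** Rot x w p) = p * (of_real (x^2) * p + of_real ((cmod w)^2) * cnj p)
      + cnj p * (of_real ((cmod w)^2) * p + of_real (x^2) * cnj p)"
    by (simp add: tr_def dg_def Rot_def wcnj)
  then have "Re (tr (dg p ** Rot x w p)) = x^2 * (2 * (Re p)^2 - 2 * (Im p)^2) + 2 * (cmod w)^2 * ((Re p)^2 + (Im p)^2)"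
    by (simp add: algebra_simps power2_eq_square)
  also have "\<dots> = 2 - 4 * x^2 * (Im p)^2"
  proof -
    have r: "(Re p)^2 = 1 - (Im p)^2" and ww: "(cmod w)^2 = 1 - x^2" using p xw by linarith+
    show ?thesis by (simp only: r ww) algebra
  qed
  finally show ?thesis .
qed

lemma cont_mk: assumes "continuous_on S a" "continuous_on S b" "continuous_on S c" "continuous_on S d"
  shows "continuous_on S (\<lambda>t. mk (a t) (b t) (c t) (d t))"
  unfolding mk_def
proof (rule continuous_on_vec_lambda, rule continuous_on_vec_lambda)
  fix i j :: 2
  show "continuous_on S (\<lambda>t. if i = 1 then if j = 1 then a t else b t else if j = 1 then c t else d t)"
    using assms by (cases "i = 1"; cases "j = 1") simp_all
qed

lemma cont_Rot: assumes "continuous_on S x" "continuous_on S w"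
  shows "continuous_on S (\<lambda>t. Rot (x t) (w t) q)"
  unfolding Rot_def using assms by (intro cont_mk continuous_intros)

definition Qd :: "complex \<Rightarrow> complex \<Rightarrow> real \<Rightarrow> quad" where
  "Qd p q t = (dg p, dg q, Rot (sqrt (1 - t)) (of_real (sqrt t)) q, Rot (sqrt (1 - t)) (of_real (sqrt t)) p)"

lemma cont_Qd: "continuous_on {0..1} (Qd p q)"
  unfolding Qd_def by (intro continuous_intros cont_Rot)

lemma sqrt_norm: "t \<in> {0..1} \<Longrightarrow> (sqrt (1 - t))^2 + (cmod (complex_of_real (sqrt t)))^2 = 1"
  by simp

lemma Qd_RepSp: assumes p: "p * cnj p = 1" and q: "q * cnj q = 1" and t: "t \<in> {0..1}"
  shows "Qd p q t \<in> RepSp"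
proof -
  note h = sqrt_norm[OF t]
  show ?thesis unfolding Qd_def Kmat_conj[OF h, symmetric]
    by (rule RepSp_I[OF dg_SU2[OF p] dg_SU2[OF q] dg_comm Kmat_SU2[OF h]])
qed

lemma Qd_Iseg: assumes t: "t \<in> {0..1}"
  shows "cls (Qd p q t) \<in> Iseg (dg p) (dg q)"
proof -
  note h = sqrt_norm[OF t]
  let ?k = "Kmat (sqrt (1 - t)) (complex_of_real (sqrt t))"
  have "Qd p q t = (dg p, dg q, ?k ** dg q ** matrix_inv ?k, ?k ** dg p ** matrix_inv ?k)"
    unfolding Qd_def Kmat_conj[OF h, symmetric] cnjg_def ..
  then show ?thesis unfolding Iseg_def using Kmat_SU2[OF h] Kmat_sq[OF h]
    by (intro CollectI exI[of _ ?k]) simp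
qed

lemma unit_ReIm: "p * cnj p = 1 \<Longrightarrow> (Re p)^2 + (Im p)^2 = 1"
  by (metis complex_mult_cnj of_real_eq_1_iff)

lemma Fq_Qd: assumes p: "p * cnj p = 1" and q: "q * cnj q = 1" and t: "t \<in> {0..1}"
  shows "Fq (Qd p q t) = 4 - 4 * (1 - t) * ((Im p)^2 + (Im q)^2)"
proof -
  note h = sqrt_norm[OF t]
  have "Fq (Qd p q t) = Re (tr (dg p ** Rot (sqrt (1 - t)) (of_real (sqrt t)) p))
     + Re (tr (dg q ** Rot (sqrt (1 - t)) (of_real (sqrt t)) q))"
    unfolding Qd_def Fq_def by simp
  also have "\<dots> = (2 - 4 * (sqrt (1 - t))^2 * (Im p)^2) + (2 - 4 * (sqrt (1 - t))^2 * (Im q)^2)"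
    using Re_tr_Rot[OF unit_ReIm[OF p] h] Re_tr_Rot[OF unit_ReIm[OF q] h] by simp
  also have "\<dots> = 4 - 4 * (1 - t) * ((Im p)^2 + (Im q)^2)" using t by (simp add: algebra_simps)
  finally show ?thesis .
qed

lemma Rot_1_0: "Rot 1 0 q = dg q"
  by (simp add: Rot_def dg_def)

lemma Rot_0_1: "Rot 0 1 q = dg (cnj q)"
  by (simp add: Rot_def dg_def)

lemma Qd_0: "Qd p q 0 = (dg p, dg q, dg q, dg p)"
  by (simp add: Qd_def Rot_1_0)

lemma Qd_1: "p * cnj p = 1 \<Longrightarrow> q * cnj q = 1 \<Longrightarrow> Qd p q 1 = (dg p, dg q, matrix_inv (dg q), matrix_inv (dg p))"
  by (simp add: Qd_def Rot_0_1 dg_inv)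

lemma exists_phase: "\<exists>e. e * cnj e = 1 \<and> e^2 * of_real (cmod w) = w"
proof (cases "w = 0")
  case True then show ?thesis by (intro exI[of _ 1]) simp
next
  case False
  define e where "e = csqrt (w / of_real (cmod w))"
  have n: "cmod w \<noteq> 0" using False by simp
  have e2: "e^2 = w / of_real (cmod w)" unfolding e_def by simp
  have "cmod e = 1" unfolding e_def using n by (simp add: norm_divide)
  then have "e * cnj e = 1" by (metis complex_norm_square mult.commute norm_one of_real_1 power_one)
  moreover have "e^2 * of_real (cmod w) = w" using e2 n by simp
  ultimately show ?thesis by blast
qed

lemma Iseg_surj: assumes p: "p * cnj p = 1" and q: "q * cnj q = 1"
  and c: "c \<in> Iseg (dg p) (dg q)"
  shows "\<exists>t\<in>{0..1}. c = cls (Qd p q t)"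
proof -
  obtain k where k: "k \<in> SU2" "k ** k = - mat 1"
    and c': "c = cls (dg p, dg q, k ** dg q ** matrix_inv k, k ** dg p ** matrix_inv k)"
    using c unfolding Iseg_def by blast
  obtain x w where kx: "k = Kmat x w" and xw: "x^2 + (cmod w)^2 = 1" using Ksq_cases[OF k] by blast
  have c2: "c = cls (dg p, dg q, Rot x w q, Rot x w p)"
    using c' Kmat_conj[OF xw] unfolding kx cnjg_def by simp
  define y where "y = \<bar>x\<bar>"
  define w' where "w' = (if x \<ge> 0 then w else - w)"
  have R: "Rot x w r = Rot y w' r" for r
    unfolding y_def w'_def using Rot_neg[of x w r] by auto
  define t where "t = (cmod w)^2"
  have t01: "t \<in> {0..1}" unfolding t_def using xw
    by (auto simp: power2_eq_square) (smt (verit) zero_le_square)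
  have sy: "sqrt (1 - t) = y" unfolding y_def t_def using xw
    by (metis add_diff_cancel_right' real_sqrt_abs)
  have st: "sqrt t = cmod w'" unfolding t_def w'_def by simp
  obtain e where e: "e * cnj e = 1" "e^2 * of_real (cmod w') = w'" using exists_phase by blast
  have "conjq (dg e) (Qd p q t) = (dg p, dg q, Rot y w' q, Rot y w' p)"
    unfolding Qd_def conjq_simp sy st cnjg_dg_dg[OF e(1)] cnjg_dg_Rot[OF e(1)] e(2) ..
  then have "cls (Qd p q t) = cls (dg p, dg q, Rot x w q, Rot x w p)"
    using cls_conjq[OF dg_SU2[OF e(1)], of "Qd p q t"] by (simp add: R)
  then show ?thesis using c2 t01 by blast
qed

lemma diag_main:
  assumes p: "p * cnj p = 1" and q: "q * cnj q = 1" and C: "(Im p)^2 + (Im q)^2 > 0"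
  shows "\<exists>f :: real \<Rightarrow> quad set.
           homeomorphic_map (top_of_set {0..1}) (subtopology Mtop (Iseg (dg p) (dg q))) f \<and>
           f 0 = cls (dg p, dg q, dg q, dg p) \<and> f 0 \<in> P1 \<and>
           f 1 = cls (dg p, dg q, matrix_inv (dg q), matrix_inv (dg p)) \<and> f 1 \<in> P2 \<and>
           (\<forall>t \<in> {0<..<1}. f t \<notin> P1 \<union> P2)"
proof -
  define C where "C = (Im p)^2 + (Im q)^2"
  have Cp: "C > 0" using C unfolding C_def .
  define f where "f t = cls (Qd p q t)" for t
  define G where "G c = 1 - (4 - Phi c) / (4 * C)" for c
  let ?I = "Iseg (dg p) (dg q)"
  have PhiQ: "Phi (f t) = 4 - 4 * (1 - t) * C" if "t \<in> {0..1}" for t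
    unfolding f_def Phi_cls C_def using Fq_Qd[OF p q that] .
  have Gf: "G (f t) = t" if "t \<in> {0..1}" for t
    unfolding G_def PhiQ[OF that] using Cp by (simp add: field_simps)
  have fI: "f t \<in> ?I" if "t \<in> {0..1}" for t unfolding f_def using Qd_Iseg[OF that] .
  have surj: "\<exists>t\<in>{0..1}. c = f t" if "c \<in> ?I" for c
    unfolding f_def using Iseg_surj[OF p q that] .
  have sp: "dg p \<in> SU2" "dg q \<in> SU2" using dg_SU2 p q by auto
  have cpq: "comm (dg p) (dg q) = mat 1" using comm_iff[OF sp] dg_comm by blast
  have f0: "f 0 = cls (dg p, dg q, dg q, dg p)" unfolding f_def Qd_0 ..
  have f1: "f 1 = cls (dg p, dg q, matrix_inv (dg q), matrix_inv (dg p))" unfolding f_def Qd_1[OF p q] ..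
  have f0P: "f 0 \<in> P1" unfolding f0 P1_def using sp cpq by blast
  have f1P: "f 1 \<in> P2" unfolding f1 P2_def using sp cpq by blast
  have notP: "f t \<notin> P1 \<union> P2" if t: "t \<in> {0<..<1}" for t
  proof
    have t01: "t \<in> {0..1}" using t by auto
    assume "f t \<in> P1 \<union> P2"
    then show False
    proof
      assume "f t \<in> P1"
      then obtain a b where ab: "a \<in> SU2" "b \<in> SU2" "f t = cls (a, b, b, a)" unfolding P1_def by blast
      obtain m where m: "m \<in> SU2" "Qd p q t = conjq m (a, b, b, a)"
        using cls_eqD[OF ab(3)[unfolded f_def]] by blast
      have "Qd p q t = (dg p, dg q, dg q, dg p)"
        using m(2) unfolding Qd_def by simp
      then have "Phi (f t) = Phi (f 0)" unfolding f_def Qd_0 by simp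
      then have "t = 0" using PhiQ[OF t01] PhiQ[of 0] Cp by simp
      then show False using t by simp
    next
      assume "f t \<in> P2"
      then obtain a b where ab: "a \<in> SU2" "b \<in> SU2"
        "f t = cls (a, b, matrix_inv b, matrix_inv a)" unfolding P2_def by blast
      obtain m where m: "m \<in> SU2" "Qd p q t = conjq m (a, b, matrix_inv b, matrix_inv a)"
        using cls_eqD[OF ab(3)[unfolded f_def]] by blast
      have e: "Qd p q t = (cnjg m a, cnjg m b, matrix_inv (cnjg m b), matrix_inv (cnjg m a))"
        using m ab by (simp add: cnjg_inv)
      have "Qd p q t = (dg p, dg q, matrix_inv (dg q), matrix_inv (dg p))"
        using e unfolding Qd_def by simp
      then have "Phi (f t) = Phi (f 1)" unfolding f_def Qd_1[OF p q] by simp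
      then have "t = 1" using PhiQ[OF t01] PhiQ[of 1] Cp by simp
      then show False using t by simp
    qed
  qed
  have cf: "continuous_map (top_of_set {0..1}) (subtopology Mtop ?I) f"
  proof (rule continuous_map_into_subtopology)
    have "continuous_map (top_of_set {0..1}) (top_of_set RepSp) (Qd p q)"
      using cont_Qd Qd_RepSp[OF p q] by simp
    then have "continuous_map (top_of_set {0..1}) Mtop (cls \<circ> Qd p q)"
      using cont_cls by (rule continuous_map_compose)
    then show "continuous_map (top_of_set {0..1}) Mtop f" unfolding f_def comp_def .
    show "f \<in> topspace (top_of_set {0..1}) \<rightarrow> ?I" using fI by auto
  qed
  have cG: "continuous_map (subtopology Mtop ?I) (top_of_set {0..1}) G"
  proof (rule continuous_map_into_subtopology)
    have "continuous_map euclideanreal euclideanreal (\<lambda>v. 1 - (4 - v) / (4 * C))"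
      using Cp by (simp, intro continuous_intros) auto
    then have "continuous_map Mtop euclideanreal ((\<lambda>v. 1 - (4 - v) / (4 * C)) \<circ> Phi)"
      using cont_Phi continuous_map_compose by blast
    then have "continuous_map Mtop euclideanreal G" unfolding G_def comp_def .
    then show "continuous_map (subtopology Mtop ?I) euclideanreal G"
      by (rule continuous_map_from_subtopology)
    show "G \<in> topspace (subtopology Mtop ?I) \<rightarrow> {0..1}"
    proof
      fix c assume "c \<in> topspace (subtopology Mtop ?I)"
      then have "c \<in> ?I" by simp
      then obtain t where "t \<in> {0..1}" "c = f t" using surj by blast
      then show "G c \<in> {0..1}" using Gf by simp
    qed
  qed
  have "homeomorphic_maps (top_of_set {0..1}) (subtopology Mtop ?I) f G"
    unfolding homeomorphic_maps_def
  proof (intro conjI ballI)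
    show "continuous_map (top_of_set {0..1}) (subtopology Mtop ?I) f" by (rule cf)
    show "continuous_map (subtopology Mtop ?I) (top_of_set {0..1}) G" by (rule cG)
    fix x assume "x \<in> topspace (top_of_set {0..1::real})"
    then show "G (f x) = x" using Gf by simp
  next
    fix c assume "c \<in> topspace (subtopology Mtop ?I)"
    then have "c \<in> ?I" by simp
    then obtain t where "t \<in> {0..1}" "c = f t" using surj by blast
    then show "f (G c) = c" using Gf by simp
  qed
  then have "homeomorphic_map (top_of_set {0..1}) (subtopology Mtop ?I) f"
    using homeomorphic_map_maps by blast
  then show ?thesis using f0 f1 f0P f1P notP by blast
qed

lemma diag1: assumes A: "A \<in> SU2" shows "\<exists>u\<in>SU2. \<exists>l. A = cnjg u (dg l)"
proof -
  obtain a b where Ab: "A = mk a b (- cnj b) (cnj a)" "a * cnj a + b * cnj b = 1"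
    using A unfolding SU2_iff by blast
  show ?thesis
  proof (cases "b = 0")
    case True
    then have "A = cnjg (mat 1) (dg a)" using Ab by (simp add: dg_def)
    then show ?thesis using SU2_one by blast
  next
    case False
    define s where "s = sqrt ((Im a)^2 + (cmod b)^2)"
    have bpos: "(cmod b)^2 > 0" using False by simp
    have s2: "s^2 = (Im a)^2 + (Re b)^2 + (Im b)^2" unfolding s_def by (simp add: cmod_power2)
    have sgt: "s > Im a"
    proof -
      have "sqrt ((Im a)^2) < s" unfolding s_def using bpos by (intro real_sqrt_less_mono) simp
      then show ?thesis by simp
    qed
    define N where "N = (cmod b)^2 + (s - Im a)^2"
    have Npos: "N > 0" unfolding N_def using bpos by (simp add: add_pos_nonneg)
    define cr where "cr = 1 / sqrt N"
    have cr2: "cr^2 * N = 1" unfolding cr_def using Npos by (simp add: power_divide)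
    define c where "c = complex_of_real cr"
    define v2 where "v2 = \<i> * complex_of_real (s - Im a)"
    define u where "u = mk (c * b) (- (c * cnj v2)) (c * v2) (c * cnj b)"
    define l where "l = complex_of_real (Re a) + \<i> * complex_of_real s"
    have uSU: "u \<in> SU2"
    proof -
      have "u = mk (c * b) (- (c * cnj v2)) (- cnj (- (c * cnj v2))) (cnj (c * b))"
        unfolding u_def c_def by simp
      moreover have "(c * b) * cnj (c * b) + (- (c * cnj v2)) * cnj (- (c * cnj v2)) = 1"
      proof -
        have "(c * b) * cnj (c * b) + (- (c * cnj v2)) * cnj (- (c * cnj v2))
             = complex_of_real (cr^2 * N)"
          unfolding c_def v2_def N_def cmod_power2
          by (simp add: complex_eq_iff power2_eq_square algebra_simps)
        then show ?thesis using cr2 by simp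
      qed
      ultimately show ?thesis using SU2_mk by metis
    qed
    have Au: "A ** u = u ** dg l"
      unfolding Ab(1) u_def dg_def l_def v2_def c_def mk_mult mk_eq_iff
      apply (intro conjI)
      apply (simp_all add: complex_eq_iff)
      apply safe
      apply (simp_all add: algebra_simps)
      apply (simp_all add: s2[unfolded power2_eq_square] algebra_simps)
      done
    have "A = A ** (u ** matrix_inv u)" using uSU by (simp add: SU2_rinv)
    also have "\<dots> = u ** dg l ** matrix_inv u" by (simp add: matrix_mul_assoc Au)
    finally have "A = cnjg u (dg l)" unfolding cnjg_def .
    then show ?thesis using uSU by blast
  qed
qed

lemma cnjg_back2: "u \<in> SU2 \<Longrightarrow> cnjg u (cnjg (matrix_inv u) X) = X"
  by (simp add: cnjg_comp SU2_inv_in SU2_rinv)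

lemma unit_real: assumes "p * cnj p = 1" "Im p = 0" shows "p = 1 \<or> p = -1"
proof -
  have "(Re p)^2 = 1" using unit_ReIm[OF assms(1)] assms(2) by simp
  then have "Re p = 1 \<or> Re p = -1" by (metis power2_eq_1_iff)
  then show ?thesis using assms(2) by (auto simp: complex_eq_iff)
qed

lemma dg_pm: "dg 1 = mat 1" "dg (-1) = - mat 1"
  by (simp_all add: dg_def mat1_mk)

lemma diag2: assumes g: "g \<in> SU2" and h: "h \<in> SU2" and gh: "g ** h = h ** g"
  shows "\<exists>u\<in>SU2. \<exists>p q. p * cnj p = 1 \<and> q * cnj q = 1 \<and> g = cnjg u (dg p) \<and> h = cnjg u (dg q)"
proof (cases "g = mat 1 \<or> g = - mat 1")
  case True
  obtain u l where u: "u \<in> SU2" "h = cnjg u (dg l)" using diag1[OF h] by blast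
  have hl: "cnjg (matrix_inv u) h = dg l" using u cnjg_back by simp
  have l: "l * cnj l = 1" using cnjg_SU2[OF SU2_inv_in[OF u(1)] h] unfolding hl dg_SU2_iff .
  show ?thesis
  proof (cases "g = mat 1")
    case True
    then have "g = cnjg u (dg 1)" using u cnjg_central by (simp add: dg_pm)
    then show ?thesis using u l by (intro bexI[of _ u] exI[of _ "1::complex"] exI[of _ l]) simp_all
  next
    case False
    then have "g = cnjg u (dg (-1))" using \<open>g = mat 1 \<or> g = - mat 1\<close> u cnjg_central by (simp add: dg_pm)
    then show ?thesis using u l by (intro bexI[of _ u] exI[of _ "-1::complex"] exI[of _ l]) simp_all
  qed
next
  case False
  obtain u p where u: "u \<in> SU2" "g = cnjg u (dg p)" using diag1[OF g] by blast
  have ui: "matrix_inv u \<in> SU2" using u SU2_inv_in by blast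
  have gp: "cnjg (matrix_inv u) g = dg p" using u cnjg_back by simp
  have p: "p * cnj p = 1" using cnjg_SU2[OF ui g] unfolding gp dg_SU2_iff .
  define h' where "h' = cnjg (matrix_inv u) h"
  have h'SU: "h' \<in> SU2" unfolding h'_def using cnjg_SU2[OF ui h] .
  obtain a b where ab: "h' = mk a b (- cnj b) (cnj a)" "a * cnj a + b * cnj b = 1"
    using h'SU unfolding SU2_iff by blast
  have "dg p ** h' = h' ** dg p"
    unfolding h'_def gp[symmetric] using gh by (simp add: cnjg_mult[OF ui, symmetric])
  then have "p * b = b * cnj p" unfolding ab dg_def by simp
  moreover have "p \<noteq> cnj p"
  proof
    assume "p = cnj p"
    then have "Im p = Im (cnj p)" by simp
    then have "Im p = 0" by simp
    then have "p = 1 \<or> p = -1" using unit_real p by blast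
    then have "g = mat 1 \<or> g = - mat 1" using u cnjg_central by (auto simp: dg_pm)
    then show False using False by blast
  qed
  ultimately have "b = 0" by (metis mult.commute mult_cancel_left)
  then have "h' = dg a" using ab by (simp add: dg_def)
  moreover have "a * cnj a = 1" using ab \<open>b = 0\<close> by simp
  moreover have "h = cnjg u h'" unfolding h'_def using cnjg_back2[OF u(1)] by simp
  ultimately show ?thesis using u p by blast
qed

lemma Iseg_alt: "Iseg g h = {cls (g, h, cnjg k h, cnjg k g) | k. k \<in> SU2 \<and> k ** k = - mat 1}"
  unfolding Iseg_def cnjg_def ..

lemma cnjg_swap: assumes "u \<in> SU2" "k \<in> SU2"
  shows "cnjg k (cnjg u X) = cnjg u (cnjg (cnjg (matrix_inv u) k) X)"
proof -
  have ui: "matrix_inv u \<in> SU2" using assms SU2_inv_in by blast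
  have k': "cnjg (matrix_inv u) k \<in> SU2" using cnjg_SU2[OF ui assms(2)] .
  have "u ** cnjg (matrix_inv u) k = (u ** matrix_inv u) ** k ** u"
    unfolding cnjg_def inv_inv[OF assms(1)] by (simp add: matrix_mul_assoc)
  then have e: "u ** cnjg (matrix_inv u) k = k ** u" using assms by (simp add: SU2_rinv)
  show ?thesis unfolding cnjg_comp[OF assms(1) k'] cnjg_comp[OF assms(2) assms(1)] e ..
qed

lemma Iseg_cnjg: assumes u: "u \<in> SU2"
  shows "Iseg (cnjg u g) (cnjg u h) = Iseg g h"
proof -
  have ui: "matrix_inv u \<in> SU2" using u SU2_inv_in by blast
  have key: "cls (cnjg u g, cnjg u h, cnjg k (cnjg u h), cnjg k (cnjg u g))
      = cls (g, h, cnjg (cnjg (matrix_inv u) k) h, cnjg (cnjg (matrix_inv u) k) g)" if k: "k \<in> SU2" for k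
  proof -
    have "(cnjg u g, cnjg u h, cnjg k (cnjg u h), cnjg k (cnjg u g))
        = conjq u (g, h, cnjg (cnjg (matrix_inv u) k) h, cnjg (cnjg (matrix_inv u) k) g)"
      using cnjg_swap[OF u k] by simp
    then show ?thesis
      using cls_conjq[OF u, of "(g, h, cnjg (cnjg (matrix_inv u) k) h, cnjg (cnjg (matrix_inv u) k) g)"]
      by simp
  qed
  have sq: "cnjg (matrix_inv u) k ** cnjg (matrix_inv u) k = - mat 1" if "k ** k = - mat 1" for k
    using cnjg_mult[OF ui, of k k, symmetric] that cnjg_central[OF ui] by simp
  have sq2: "cnjg u k ** cnjg u k = - mat 1" if "k ** k = - mat 1" for k
    using cnjg_mult[OF u, of k k, symmetric] that cnjg_central[OF u] by simp
  show ?thesis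
  proof
    show "Iseg (cnjg u g) (cnjg u h) \<subseteq> Iseg g h"
    proof
      fix c assume "c \<in> Iseg (cnjg u g) (cnjg u h)"
      then obtain k where k: "k \<in> SU2" "k ** k = - mat 1"
        "c = cls (cnjg u g, cnjg u h, cnjg k (cnjg u h), cnjg k (cnjg u g))"
        unfolding Iseg_alt by blast
      then have "c = cls (g, h, cnjg (cnjg (matrix_inv u) k) h, cnjg (cnjg (matrix_inv u) k) g)"
        using key by simp
      moreover have "cnjg (matrix_inv u) k \<in> SU2" using cnjg_SU2[OF ui k(1)] .
      ultimately show "c \<in> Iseg g h" unfolding Iseg_alt using sq[OF k(2)] by blast
    qed
    show "Iseg g h \<subseteq> Iseg (cnjg u g) (cnjg u h)"
    proof
      fix c assume "c \<in> Iseg g h"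
      then obtain k' where k': "k' \<in> SU2" "k' ** k' = - mat 1"
        "c = cls (g, h, cnjg k' h, cnjg k' g)"
        unfolding Iseg_alt by blast
      define k where "k = cnjg u k'"
      have kS: "k \<in> SU2" unfolding k_def using cnjg_SU2[OF u k'(1)] .
      have "cnjg (matrix_inv u) k = k'" unfolding k_def using cnjg_back[OF u] .
      then have "c = cls (cnjg u g, cnjg u h, cnjg k (cnjg u h), cnjg k (cnjg u g))"
        using key[OF kS] k'(3) by simp
      then show "c \<in> Iseg (cnjg u g) (cnjg u h)" unfolding Iseg_alt
        using kS sq2[OF k'(2)] unfolding k_def by blast
    qed
  qed
qed

theorem mainTheorem14:
  fixes g h :: cmat
  assumes "g \<in> SU2" and "h \<in> SU2" and "comm g h = mat 1"
  shows "((g, h) \<notin> {(s, t). (s = mat 1 \<or> s = - mat 1) \<and> (t = mat 1 \<or> t = - mat 1)} \<longrightarrow>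
            (\<exists>f :: real \<Rightarrow> quad set.
               homeomorphic_map (top_of_set {0..1}) (subtopology Mtop (Iseg g h)) f \<and>
               f 0 = cls (g, h, h, g) \<and> f 0 \<in> P1 \<and>
               f 1 = cls (g, h, matrix_inv h, matrix_inv g) \<and> f 1 \<in> P2 \<and>
               (\<forall>t \<in> {0<..<1}. f t \<notin> P1 \<union> P2)))
       \<and> ((g, h) \<in> {(s, t). (s = mat 1 \<or> s = - mat 1) \<and> (t = mat 1 \<or> t = - mat 1)} \<longrightarrow>
            (\<exists>p \<in> {cls (mat 1, mat 1, mat 1, mat 1), cls (mat 1, - mat 1, - mat 1, mat 1),
                    cls (- mat 1, mat 1, mat 1, - mat 1), cls (- mat 1, - mat 1, - mat 1, - mat 1)}.
               Iseg g h = {p}))"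
proof (intro conjI impI)
  have g: "g \<in> SU2" and h: "h \<in> SU2" using assms by auto
  have gh: "g ** h = h ** g" using assms comm_iff by blast
  {
    assume nc: "(g, h) \<notin> {(s, t). (s = mat 1 \<or> s = - mat 1) \<and> (t = mat 1 \<or> t = - mat 1)}"
    obtain u p q where u: "u \<in> SU2" and p: "p * cnj p = 1" and q: "q * cnj q = 1"
      and gu: "g = cnjg u (dg p)" and hu: "h = cnjg u (dg q)"
      using diag2[OF g h gh] by blast
    have C: "(Im p)^2 + (Im q)^2 > 0"
    proof (rule ccontr)
      assume "\<not> (Im p)^2 + (Im q)^2 > 0"
      then have a: "(Im p)^2 + (Im q)^2 \<le> 0" by simp
      have "(Im p)^2 = 0" "(Im q)^2 = 0"
        using a zero_le_power2[of "Im p"] zero_le_power2[of "Im q"] by linarith+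
      then have "Im p = 0" "Im q = 0" by simp_all
      then have "p = 1 \<or> p = -1" "q = 1 \<or> q = -1" using unit_real p q by blast+
      then have "(g = mat 1 \<or> g = - mat 1) \<and> (h = mat 1 \<or> h = - mat 1)"
        unfolding gu hu using cnjg_central[OF u] by (auto simp: dg_pm)
      then show False using nc by blast
    qed
    obtain f :: "real \<Rightarrow> quad set" where f:
      "homeomorphic_map (top_of_set {0..1}) (subtopology Mtop (Iseg (dg p) (dg q))) f"
      "f 0 = cls (dg p, dg q, dg q, dg p)" "f 0 \<in> P1"
      "f 1 = cls (dg p, dg q, matrix_inv (dg q), matrix_inv (dg p))" "f 1 \<in> P2"
      "\<forall>t \<in> {0<..<1}. f t \<notin> P1 \<union> P2"
      using diag_main[OF p q C] by blast
    have I: "Iseg g h = Iseg (dg p) (dg q)" unfolding gu hu using Iseg_cnjg[OF u] .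
    have e0: "cls (g, h, h, g) = cls (dg p, dg q, dg q, dg p)"
      unfolding gu hu using cls_conjq[OF u, of "(dg p, dg q, dg q, dg p)"] by simp
    have e1: "cls (g, h, matrix_inv h, matrix_inv g) = cls (dg p, dg q, matrix_inv (dg q), matrix_inv (dg p))"
      unfolding gu hu cnjg_inv[OF u dg_SU2[OF q], symmetric] cnjg_inv[OF u dg_SU2[OF p], symmetric]
      using cls_conjq[OF u, of "(dg p, dg q, matrix_inv (dg q), matrix_inv (dg p))"] by simp
    show "\<exists>f :: real \<Rightarrow> quad set.
               homeomorphic_map (top_of_set {0..1}) (subtopology Mtop (Iseg g h)) f \<and>
               f 0 = cls (g, h, h, g) \<and> f 0 \<in> P1 \<and>
               f 1 = cls (g, h, matrix_inv h, matrix_inv g) \<and> f 1 \<in> P2 \<and>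
               (\<forall>t \<in> {0<..<1}. f t \<notin> P1 \<union> P2)"
      unfolding I e0 e1 using f by blast
  }
  {
    assume cz: "(g, h) \<in> {(s, t). (s = mat 1 \<or> s = - mat 1) \<and> (t = mat 1 \<or> t = - mat 1)}"
    then have gz: "g = mat 1 \<or> g = - mat 1" and hz: "h = mat 1 \<or> h = - mat 1" by auto
    have cg: "cnjg k g = g" "cnjg k h = h" if "k \<in> SU2" for k
      using gz hz cnjg_central[OF that] by auto
    have h10: "1^2 + (cmod 0)^2 = (1::real)" by simp
    have "Iseg g h = {cls (g, h, h, g)}"
    proof
      show "Iseg g h \<subseteq> {cls (g, h, h, g)}" unfolding Iseg_alt using cg by auto
      show "{cls (g, h, h, g)} \<subseteq> Iseg g h" unfolding Iseg_alt
        using Kmat_SU2[OF h10] Kmat_sq[OF h10] cg[OF Kmat_SU2[OF h10]] by force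
    qed
    moreover have "cls (g, h, h, g) \<in> {cls (mat 1, mat 1, mat 1, mat 1), cls (mat 1, - mat 1, - mat 1, mat 1),
                    cls (- mat 1, mat 1, mat 1, - mat 1), cls (- mat 1, - mat 1, - mat 1, - mat 1)}"
      using gz hz by auto
    ultimately show "\<exists>p \<in> {cls (mat 1, mat 1, mat 1, mat 1), cls (mat 1, - mat 1, - mat 1, mat 1),
                    cls (- mat 1, mat 1, mat 1, - mat 1), cls (- mat 1, - mat 1, - mat 1, - mat 1)}.
               Iseg g h = {p}" by blast
  }
qed

end
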